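(* Let $a\in C[0,1]$ change sign in $(0,1)$, and let $\Omega_-:=a^{-1}((-\infty,0))\subset[0,1]$. For every $\lambda<\pi^2$, let $u_\lambda$ be a positive solution of $$-u''=\lambda u+a(x)u^2\ \text{ in }(0,1),\qquad u(0)=u(1)=0.$$ Then $$\lim_{\lambda\downarrow-\infty}u_\lambda(x)=0\quad\text{for all }x\in\Omega_-,$$ uniformly on compact subintervals of $\Omega_-$. *)

theory Defs
  imports "HOL-Analysis.Analysis"
begin

definition is_pos_solution :: "(real \<Rightarrow> real) \<Rightarrow> real \<Rightarrow> (real \<Rightarrow> real) \<Rightarrow> bool" where
  "is_pos_solution a lam u \<longleftrightarrow>
     continuous_on {0..1} u \<and> u 0 = 0 \<and> u 1 = 0 \<and>
     (\<forall>x\<in>{0<..<1}. u x > 0) \<and>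
     (\<exists>u' u''. \<forall>x\<in>{0<..<1}.
        (u has_real_derivative u' x) (at x) \<and>
        (u' has_real_derivative u'' x) (at x) \<and>
        - u'' x = lam * u x + a x * (u x)^2)"

definition Omega_minus :: "(real \<Rightarrow> real) \<Rightarrow> real set" where
  "Omega_minus a = {x \<in> {0..1}. a x < 0}"

end

theory Submission imports Defs "HOL-Real_Asymp.Real_Asymp" begin

lemma max_principle:
  fixes g g' g'' :: "real \<Rightarrow> real"
  assumes pq: "p \<le> q" and gc: "continuous_on {p..q} g" and gp: "g p \<le> 0" and gq: "g q \<le> 0"
    and der: "\<And>x. x \<in> {p<..<q} \<Longrightarrow> (g has_real_derivative g' x) (at x) \<and> (g' has_real_derivative g'' x) (at x)"
    and pos: "\<And>x. x \<in> {p<..<q} \<Longrightarrow> g x > 0 \<Longrightarrow> g'' x > 0"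
  shows "\<forall>x\<in>{p..q}. g x \<le> 0"
proof (rule ccontr)
  assume "\<not> (\<forall>x\<in>{p..q}. g x \<le> 0)"
  then obtain x1 where x1: "x1 \<in> {p..q}" "g x1 > 0" by auto
  obtain z where z: "z \<in> {p..q}" "\<forall>y\<in>{p..q}. g y \<le> g z"
    using continuous_attains_sup[OF compact_Icc _ gc] pq by auto
  have gz: "g z > 0" using x1 z by force
  have zi: "z \<in> {p<..<q}" using z gz gp gq by (cases "z = p"; cases "z = q"; auto)
  have d1: "(g has_real_derivative g' z) (at z)" and d2: "(g' has_real_derivative g'' z) (at z)"
    using der[OF zi] by auto
  have g'z: "g' z = 0"
  proof (rule DERIV_local_max[OF d1])
    show "0 < min (z - p) (q - z)" using zi by auto
    show "\<forall>y. \<bar>z - y\<bar> < min (z - p) (q - z) \<longrightarrow> g y \<le> g z" using z(2) by (auto simp: abs_if split: if_splits)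
  qed
  have "g'' z > 0" using pos[OF zi gz] .
  then obtain d where d: "d > 0" "\<And>h. h > 0 \<Longrightarrow> h < d \<Longrightarrow> g' z < g' (z + h)"
    using DERIV_pos_inc_right[OF d2] by blast
  define h where "h = min (d/2) ((q - z)/2)"
  have h: "h > 0" "h < d" "z + h < q" using d(1) zi unfolding h_def by (auto simp: min_def field_simps)
  have "\<forall>x. z \<le> x \<and> x \<le> z + h \<longrightarrow> (g has_real_derivative g' x) (at x)"
    using der zi h by auto
  then obtain \<xi> where xi: "z < \<xi>" "\<xi> < z + h" "g (z + h) - g z = (z + h - z) * g' \<xi>"
    using MVT2[of z "z+h" g g'] h by auto
  have "g' \<xi> > 0" using d(2)[of "\<xi> - z"] xi h g'z by auto
  then have "g (z + h) > g z" using xi h by (simp add: algebra_simps)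
  moreover have "z + h \<in> {p..q}" using zi h by auto
  ultimately show False using z(2) by force
qed
lemma D1:
  fixes k L \<alpha> x :: real
  assumes "sinh (k*(x-L)) \<noteq> 0"
  shows "((\<lambda>x. \<alpha> / sinh (k*(x-L))^2) has_real_derivative
          (-2*\<alpha>*k*cosh (k*(x-L)) / sinh (k*(x-L))^3)) (at x)"
  using assms
  by (auto intro!: derivative_eq_intros simp: field_simps power2_eq_square power3_eq_cube)

lemma aux_id:
  fixes c s \<alpha> k :: real
  assumes "c*c = s^2+1"
  shows "\<alpha>*(k*(k*(6*(c*(c* s ^ 8))))) = \<alpha>*(4*(k^2* s ^ 10)) + (\<alpha>*(6*(k^2* s ^ 8)) + \<alpha>*(k*(k*(2*(s* s ^ 9)))))"
proof -
  have "\<alpha>*(k*(k*(6*(c*(c* s ^ 8))))) = 6*\<alpha>*k^2* s ^ 8*(c*c)" by (simp add: algebra_simps power2_eq_square)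
  also have "\<dots> = 6*\<alpha>*k^2* s ^ 8*(s^2+1)" using assms by simp
  finally show ?thesis by (simp add: algebra_simps power2_eq_square flip: power_Suc power_add)
qed

lemma D2:
  fixes k L \<alpha> x :: real
  assumes "sinh (k*(x-L)) \<noteq> 0"
  shows "((\<lambda>x. -2*\<alpha>*k*cosh (k*(x-L)) / sinh (k*(x-L))^3) has_real_derivative
          (\<alpha>*k^2*(4/sinh (k*(x-L))^2 + 6/sinh (k*(x-L))^4))) (at x)"
proof -
  have c: "cosh (k*(x-L))^2 = sinh (k*(x-L))^2 + 1" by (rule cosh_square_eq)
  show ?thesis
  using assms
  apply (auto intro!: derivative_eq_intros)
  apply (simp add: field_simps)
  apply (rule aux_id)
  using cosh_square_eq[of "k * x - L * k"] by (simp add: power2_eq_square)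
qed


lemma key:
  fixes a u :: "real \<Rightarrow> real" and lam m r x0 :: real
  assumes sol: "is_pos_solution a lam u" and lam: "lam < 0" and m: "m > 0" and r: "r > 0"
    and x0: "x0 \<in> {0..1}" and aneg: "\<And>x. x \<in> {0..1} \<Longrightarrow> \<bar>x - x0\<bar> < r \<Longrightarrow> a x \<le> - m"
  shows "u x0 \<le> 3 * (-lam) / (m * sinh (sqrt (-lam) / 2 * r)^2)"
proof -
  define \<mu> where "\<mu> = -lam"
  define k where "k = sqrt \<mu> / 2"
  define \<alpha> where "\<alpha> = 3 * \<mu> / (2 * m)"
  define L where "L = x0 - r"
  define R where "R = x0 + r"
  have \<mu>: "\<mu> > 0" using lam by (simp add: \<mu>_def)
  have k: "k > 0" using \<mu> by (simp add: k_def)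
  have \<alpha>: "\<alpha> > 0" using \<mu> m by (simp add: \<alpha>_def)
  have kk: "k^2 = \<mu> / 4" using \<mu> by (simp add: k_def power_divide)
  from sol obtain u' u'' where uc: "continuous_on {0..1} u" and u0: "u 0 = 0" and u1: "u 1 = 0"
    and upos: "\<And>x. x \<in> {0<..<1} \<Longrightarrow> u x > 0"
    and uder: "\<And>x. x \<in> {0<..<1} \<Longrightarrow> (u has_real_derivative u' x) (at x) \<and>
        (u' has_real_derivative u'' x) (at x) \<and> - u'' x = lam * u x + a x * (u x)^2"
    unfolding is_pos_solution_def by metis
  obtain M0 where M0: "\<And>x. x \<in> {0..1} \<Longrightarrow> u x \<le> M0"
    using continuous_attains_sup[OF compact_Icc _ uc] by force
  define M where "M = max M0 1"
  have M: "M > 0" "\<And>x. x \<in> {0..1} \<Longrightarrow> u x \<le> M" using M0 by (force simp: M_def max_def)+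
  have T0: "((\<lambda>t. sinh (k*t)^2) \<longlongrightarrow> sinh (k*0)^2) (at_right 0)"
    by (intro tendsto_intros)
  have T: "((\<lambda>t. sinh (k*t)^2) \<longlongrightarrow> 0) (at_right 0)" using T0 by simp
  have "eventually (\<lambda>t. sinh (k*t)^2 < \<alpha> / M) (at_right 0)"
    using \<alpha> M by (intro order_tendstoD(2)[OF T]) auto
  moreover have "eventually (\<lambda>t. t \<in> {0<..<r}) (at_right 0)"
    using eventually_at_right_real[OF r] .
  ultimately have "eventually (\<lambda>t. sinh (k*t)^2 < \<alpha> / M \<and> t \<in> {0<..<r}) (at_right (0::real))"
    by (rule eventually_conj)
  then obtain b where b: "b > 0" "\<And>y. y > 0 \<Longrightarrow> y < b \<Longrightarrow> sinh (k*y)^2 < \<alpha> / M \<and> y \<in> {0<..<r}"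
    unfolding eventually_at_right_field by auto
  define t where "t = b / 2"
  have t: "t > 0" "t < r" "sinh (k*t)^2 < \<alpha> / M" using b(2)[of t] b(1) by (auto simp: t_def)
  have sinht: "sinh (k*t) > 0" using k t by simp
  have big: "\<alpha> / sinh (k*t)^2 > M"
  proof -
    have sp: "sinh (k*t)^2 > 0" using sinht by (metis zero_less_power)
    have "M * sinh (k*t)^2 < \<alpha>" using t(3) M(1) by (simp add: field_simps)
    then show ?thesis using sp by (simp add: pos_less_divide_eq)
  qed
  define s where "s = r - t"
  define p where "p = max 0 (x0 - s)"
  define q where "q = min 1 (x0 + s)"
  have s: "s > 0" "s < r" using t by (auto simp: s_def)
  have pq: "p \<le> x0" "x0 \<le> q" "L < p" "q < R" "0 \<le> p" "q \<le> 1"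
    using x0 s r by (auto simp: p_def q_def L_def R_def)
  define w1 where "w1 = (\<lambda>x. \<alpha> / sinh (k*(x-L))^2)"
  define w2 where "w2 = (\<lambda>x. \<alpha> / sinh ((-k)*(x-R))^2)"
  define w1' where "w1' = (\<lambda>x. -2*\<alpha>*k*cosh (k*(x-L)) / sinh (k*(x-L))^3)"
  define w2' where "w2' = (\<lambda>x. -2*\<alpha>*(-k)*cosh ((-k)*(x-R)) / sinh ((-k)*(x-R))^3)"
  define w1'' where "w1'' = (\<lambda>x. \<alpha>*k^2*(4/sinh (k*(x-L))^2 + 6/sinh (k*(x-L))^4))"
  define w2'' where "w2'' = (\<lambda>x. \<alpha>*(-k)^2*(4/sinh ((-k)*(x-R))^2 + 6/sinh ((-k)*(x-R))^4))"
  have s1: "sinh (k*(x-L)) > 0" if "x \<in> {L<..<R}" for x using that k by simp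
  have s2: "sinh ((-k)*(x-R)) > 0" if "x \<in> {L<..<R}" for x using that k
    by (simp add: mult_pos_neg)
  have dw1: "(w1 has_real_derivative w1' x) (at x)" "(w1' has_real_derivative w1'' x) (at x)"
    if "x \<in> {L<..<R}" for x
  proof -
    have ne: "sinh (k*(x-L)) \<noteq> 0" using s1[OF that] by (metis order_less_irrefl)
    show "(w1 has_real_derivative w1' x) (at x)" unfolding w1_def w1'_def by (rule D1[OF ne])
    show "(w1' has_real_derivative w1'' x) (at x)" unfolding w1'_def w1''_def by (rule D2[OF ne])
  qed
  have dw2: "(w2 has_real_derivative w2' x) (at x)" "(w2' has_real_derivative w2'' x) (at x)"
    if "x \<in> {L<..<R}" for x
  proof -
    have ne: "sinh ((-k)*(x-R)) \<noteq> 0" using s2[OF that] by (metis order_less_irrefl)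
    show "(w2 has_real_derivative w2' x) (at x)" unfolding w2_def w2'_def by (rule D1[OF ne])
    show "(w2' has_real_derivative w2'' x) (at x)" unfolding w2'_def w2''_def by (rule D2[OF ne])
  qed
  have w1pos: "w1 x > 0" if "x \<in> {L<..<R}" for x
    unfolding w1_def by (intro divide_pos_pos \<alpha> zero_less_power s1[OF that])
  have w2pos: "w2 x > 0" if "x \<in> {L<..<R}" for x
    unfolding w2_def by (intro divide_pos_pos \<alpha> zero_less_power s2[OF that])
  have w1'': "w1'' x = \<mu> * w1 x + m * (w1 x)^2" if "x \<in> {L<..<R}" for x
    using s1[OF that] \<alpha> m \<mu> unfolding w1''_def w1_def kk \<alpha>_def
    by (simp add: field_simps power2_eq_square) (simp add: power_def)
  have w2'': "w2'' x = \<mu> * w2 x + m * (w2 x)^2" if "x \<in> {L<..<R}" for x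
    using s2[OF that] \<alpha> m \<mu> unfolding w2''_def w2_def power_minus_Bit0 kk \<alpha>_def
    by (simp add: field_simps power2_eq_square) (simp add: power_def)
  define g where "g = (\<lambda>x. u x - (w1 x + w2 x))"
  have sub: "{p..q} \<subseteq> {L<..<R}" "{p<..<q} \<subseteq> {0<..<1}" "{p..q} \<subseteq> {0..1}" using pq by auto
  have gc: "continuous_on {p..q} g"
  proof -
    have "continuous_on {p..q} u" using continuous_on_subset[OF uc sub(3)] .
    moreover have "continuous_on {p..q} w1" "continuous_on {p..q} w2"
    proof -
      have "isCont w1 x" "isCont w2 x" if "x \<in> {p..q}" for x
        using DERIV_isCont[OF dw1(1)] DERIV_isCont[OF dw2(1)] sub(1) that by blast+
      then show "continuous_on {p..q} w1" "continuous_on {p..q} w2"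
        by (auto intro!: continuous_at_imp_continuous_on)
    qed
    ultimately show ?thesis unfolding g_def by (intro continuous_intros)
  qed
  have wbig: "u x \<le> w1 x + w2 x" if "x \<in> {0..1}" "\<bar>x - x0\<bar> = s" "x \<in> {L<..<R}" for x
  proof (cases "x < x0")
    case True
    then have "x - L = t" using that by (auto simp: L_def s_def)
    then have "w1 x > M" using big by (simp add: w1_def)
    then show ?thesis using M(2)[OF that(1)] w2pos[OF that(3)] by linarith
  next
    case False
    then have "R - x = t" using that by (auto simp: R_def s_def)
    then have "(-k)*(x - R) = k*t" by (metis minus_diff_eq mult_minus_left mult_minus_right)
    then have "w2 x > M" using big unfolding w2_def by metis
    then show ?thesis using M(2)[OF that(1)] w1pos[OF that(3)] by linarith
  qed
  have gp: "g p \<le> 0"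
  proof (cases "p = 0")
    case True
    then show ?thesis using u0 w1pos[of p] w2pos[of p] sub pq by (auto simp: g_def)
  next
    case False
    then have "p = x0 - s" by (auto simp: p_def max_def split: if_splits)
    then show ?thesis using wbig[of p] sub pq s by (auto simp: g_def)
  qed
  have gq: "g q \<le> 0"
  proof (cases "q = 1")
    case True
    then show ?thesis using u1 w1pos[of q] w2pos[of q] sub pq by (auto simp: g_def)
  next
    case False
    then have "q = x0 + s" by (auto simp: q_def min_def split: if_splits)
    then show ?thesis using wbig[of q] sub pq s by (auto simp: g_def)
  qed
  have "\<forall>x\<in>{p..q}. g x \<le> 0"
  proof (rule max_principle[OF _ gc gp gq, where g' = "\<lambda>x. u' x - (w1' x + w2' x)"
        and g'' = "\<lambda>x. u'' x - (w1'' x + w2'' x)"])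
    show "p \<le> q" using pq by simp
  next
    fix x assume x: "x \<in> {p<..<q}"
    have xi: "x \<in> {0<..<1}" "x \<in> {L<..<R}" using x pq by auto
    show "(g has_real_derivative u' x - (w1' x + w2' x)) (at x) \<and>
          ((\<lambda>x. u' x - (w1' x + w2' x)) has_real_derivative u'' x - (w1'' x + w2'' x)) (at x)"
      unfolding g_def using uder[OF xi(1)] dw1[OF xi(2)] dw2[OF xi(2)]
      by (auto intro!: derivative_intros)
  next
    fix x assume x: "x \<in> {p<..<q}" and gx: "g x > 0"
    have xi: "x \<in> {0<..<1}" "x \<in> {L<..<R}" using x pq by auto
    have ax: "a x \<le> - m"
      using aneg[of x] xi pq x by (auto simp: L_def R_def abs_if)
    define U where "U = u x"
    define W where "W = w1 x + w2 x"
    have UW: "U > W" "W > 0" using gx w1pos[OF xi(2)] w2pos[OF xi(2)]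
      by (auto simp: g_def U_def W_def)
    have "u'' x = \<mu> * U - a x * U^2" using uder[OF xi(1)] by (simp add: U_def \<mu>_def algebra_simps)
    moreover have "- a x * U^2 \<ge> m * U^2" using ax by (intro mult_right_mono) auto
    ultimately have uu: "u'' x \<ge> \<mu> * U + m * U^2" by linarith
    have "w1'' x + w2'' x = \<mu> * W + m * ((w1 x)^2 + (w2 x)^2)"
      using w1''[OF xi(2)] w2''[OF xi(2)] by (simp add: W_def algebra_simps)
    also have "\<dots> \<le> \<mu> * W + m * W^2"
      using w1pos[OF xi(2)] w2pos[OF xi(2)] m
      by (auto simp: W_def power2_eq_square algebra_simps)
    also have "\<dots> < \<mu> * U + m * U^2"
      using UW \<mu> m by (intro add_strict_mono mult_strict_left_mono power_strict_mono) auto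
    finally show "u'' x - (w1'' x + w2'' x) > 0" using uu by linarith
  qed
  then have "g x0 \<le> 0" using pq by auto
  moreover have "w1 x0 + w2 x0 = 3 * (-lam) / (m * sinh (sqrt (-lam) / 2 * r)^2)"
    by (simp add: w1_def w2_def L_def R_def \<alpha>_def k_def \<mu>_def field_simps)
  ultimately show ?thesis by (simp add: g_def)
qed

lemma Flim:
  fixes m r :: real
  assumes "m > 0" "r > 0"
  shows "((\<lambda>lam::real. 3 * (-lam) / (m * sinh (sqrt (-lam) / 2 * r)^2)) \<longlongrightarrow> 0) at_bot"
  using assms by real_asymp

lemma unif:
  fixes a :: "real \<Rightarrow> real" and u :: "real \<Rightarrow> real \<Rightarrow> real"
  assumes cont: "continuous_on {0..1} a"
    and sol: "\<And>lam. lam < pi^2 \<Longrightarrow> is_pos_solution a lam (u lam)"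
    and cd: "c \<le> d" "{c..d} \<subseteq> Omega_minus a"
  shows "uniform_limit {c..d} u (\<lambda>x. 0) at_bot"
proof -
  have cd01: "{c..d} \<subseteq> {0..1}" and aneg0: "\<And>y. y \<in> {c..d} \<Longrightarrow> a y < 0"
    using cd(2) by (auto simp: Omega_minus_def)
  obtain y0 where y0: "y0 \<in> {c..d}" "\<And>y. y \<in> {c..d} \<Longrightarrow> a y \<le> a y0"
    using continuous_attains_sup[OF compact_Icc _ continuous_on_subset[OF cont cd01]] cd(1) by force
  define m where "m = - a y0 / 2"
  have m: "m > 0" using aneg0[OF y0(1)] by (simp add: m_def)
  have "uniformly_continuous_on {0..1} a"
    by (rule compact_uniformly_continuous[OF cont compact_Icc])
  then obtain r where r: "r > 0" and rr: "\<And>x y. x \<in> {0..1} \<Longrightarrow> y \<in> {0..1} \<Longrightarrow> dist y x < r \<Longrightarrow> dist (a y) (a x) < m"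
    unfolding uniformly_continuous_on_def using m by metis
  have aneg: "a x \<le> - m" if "x \<in> {0..1}" "\<bar>x - x0\<bar> < r" "x0 \<in> {c..d}" for x x0
  proof -
    have "dist (a x) (a x0) < m" using rr[of x0 x] that cd01 by (auto simp: dist_real_def)
    moreover have "a x0 \<le> a y0" using y0(2) that(3) .
    ultimately show ?thesis by (auto simp: dist_real_def m_def)
  qed
  define F where "F = (\<lambda>lam::real. 3 * (-lam) / (m * sinh (sqrt (-lam) / 2 * r)^2))"
  have bound: "0 \<le> u lam x0 \<and> u lam x0 \<le> F lam" if "lam < 0" "x0 \<in> {c..d}" for lam x0
  proof
    have s: "is_pos_solution a lam (u lam)" using sol[of lam] that(1)
      by (smt (verit) pi_gt_zero zero_less_power)
    have x0: "x0 \<in> {0..1}" using that(2) cd01 by auto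
    show "u lam x0 \<le> F lam" unfolding F_def
      by (rule key[OF s that(1) m r x0]) (use aneg that(2) in auto)
    show "0 \<le> u lam x0"
    proof (cases "x0 = 0 \<or> x0 = 1")
      case True
      then show ?thesis using s by (auto simp: is_pos_solution_def)
    next
      case False
      then have "x0 \<in> {0<..<1}" using x0 by auto
      then show ?thesis using s unfolding is_pos_solution_def by (metis less_imp_le)
    qed
  qed
  show ?thesis
    unfolding uniform_limit_iff
  proof (intro allI impI)
    fix e :: real assume e: "e > 0"
    have "eventually (\<lambda>lam. F lam < e) at_bot"
      using order_tendstoD(2)[OF Flim[OF m r] e] by (simp add: F_def)
    moreover have "eventually (\<lambda>lam::real. lam < 0) at_bot" by (rule eventually_gt_at_bot)
    ultimately show "eventually (\<lambda>lam. \<forall>x\<in>{c..d}. dist (u lam x) 0 < e) at_bot"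
    proof eventually_elim
      case (elim lam)
      show ?case
      proof
        fix x assume "x \<in> {c..d}"
        with bound[OF elim(2) this] elim(1) show "dist (u lam x) 0 < e"
          by (auto simp: dist_real_def)
      qed
    qed
  qed
qed

theorem theorem3p1:
  fixes a :: "real \<Rightarrow> real" and u :: "real \<Rightarrow> real \<Rightarrow> real"
  assumes cont: "continuous_on {0..1} a"
    and sign_change: "\<exists>x\<in>{0<..<1}. a x > 0" "\<exists>y\<in>{0<..<1}. a y < 0"
    and sol: "\<And>lam. lam < pi^2 \<Longrightarrow> is_pos_solution a lam (u lam)"
  shows "(\<forall>x\<in>Omega_minus a. ((\<lambda>lam. u lam x) \<longlongrightarrow> 0) at_bot) \<and>
         (\<forall>c d. c \<le> d \<and> {c..d} \<subseteq> Omega_minus a \<longrightarrow>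
            uniform_limit {c..d} u (\<lambda>x. 0) at_bot)"
proof
  show U: "\<forall>c d. c \<le> d \<and> {c..d} \<subseteq> Omega_minus a \<longrightarrow> uniform_limit {c..d} u (\<lambda>x. 0) at_bot"
    using unif[OF cont sol] by blast
  show "\<forall>x\<in>Omega_minus a. ((\<lambda>lam. u lam x) \<longlongrightarrow> 0) at_bot"
  proof
    fix x assume x: "x \<in> Omega_minus a"
    have "uniform_limit {x..x} u (\<lambda>x. 0) at_bot" using U[rule_format, of x x] x by simp
    from tendsto_uniform_limitI[OF this] show "((\<lambda>lam. u lam x) \<longlongrightarrow> 0) at_bot" by simp
  qed
qed

end
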